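(* Let $E$ be a countable directed graph which is row-finite and has no sources, let $G$ be a discrete group acting on $E$ by graph automorphisms, and let $\varphi:G\times E^1\to G$ be a 1-cocycle with $\varphi(g,a)\cdot x=g\cdot x$ for all $g,a,x$. Then the following are equivalent: (1) for every $g\in G$ and every $x\in E^0$ there are only finitely many minimal strongly fixed paths for $g$ with range $x$; (2) the groupoid $\mathcal{G}_{\mathrm{tight}}^{(G,E)}$ is Hausdorff.
   Context: Conventions: paths $\alpha=\alpha_1\cdots\alpha_n$ with $s(\alpha_i)=r(\alpha_{i+1})$, $r(\alpha)=r(\alpha_1)$, $s(\alpha)=s(\alpha_n)$; row-finite without sources means $0<|r^{-1}(x)|<\infty$ for all vertices. 1-cocycle: $\varphi(gh,a)=\varphi(g,ha)\varphi(h,a)$; action and cocycle extend to finite paths by $g(a\alpha')=(ga)(\varphi(g,a)\alpha')$, $\varphi(g,a\alpha')=\varphi(\varphi(g,a),\alpha')$, and $\varphi(g,x)=g$ on vertices; $G$ acts on infinite paths analogously. A finite path $\alpha$ is strongly fixed by $g$ if $g\alpha=\alpha$ and $\varphi(g,\alpha)=1$; it is a minimal strongly fixed path for $g$ if moreover no proper prefix of $\alpha$ is strongly fixed by $g$. $\mathcal{G}_{\mathrm{tight}}^{(G,E)}$ is the groupoid of germs of the action of the inverse semigroup $\mathcal{S}_{G,E}=\{(\alpha,g,\beta):\alpha,\beta\in E^*,g\in G,s(\alpha)=g\,s(\beta)\}\cup\{0\}$ on its tight spectrum, which here is identified with the infinite path space $E^\infty$ (topology generated by cylinders $Z(\gamma)=\{\gamma\eta\}$),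 the action being $(\alpha,g,\beta)\cdot\beta\eta=\alpha(g\eta)$. Explicitly, its elements are germs $[\alpha,g,\beta;\xi]$ with $\xi\in Z(\beta)$, where $[s;\xi]=[t;\mu]$ iff $\xi=\mu$ and there is a nonzero idempotent $e=(\gamma,1,\gamma)$ with $e\cdot\xi=\xi$ and $se=te$ (products in $\mathcal{S}_{G,E}$: $(\alpha,g,\beta)(\gamma,h,\delta)$ equals $(\alpha,g\varphi(h,\varepsilon),\delta(h^{-1}\varepsilon))$ if $\beta=\gamma\varepsilon$, $(\alpha(g\varepsilon),\varphi(g,\varepsilon)h,\delta)$ if $\gamma=\beta\varepsilon$, $0$ otherwise); $s([\alpha,g,\beta;\beta\eta])=\beta\eta$, $r([\alpha,g,\beta;\beta\eta])=\alpha(g\eta)$; a basis of the topology is given by the sets $\{[\alpha,g,\beta;\xi]:\xi\in Z(\gamma)\}$. *)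

theory Defs
  imports "HOL-Algebra.Group" "HOL-Analysis.Analysis"
begin

text \<open>Finite paths are pairs (x, as): the range vertex x and the edge list as
  (the empty list gives the vertex x viewed as a path of length 0).\<close>

type_synonym ('v,'e) fpath = "'v \<times> 'e list"

definition row_finite_no_sources :: "('e \<Rightarrow> 'v) \<Rightarrow> bool" where
  "row_finite_no_sources r \<equiv> (\<forall>x. finite {a. r a = x} \<and> {a. r a = x} \<noteq> {})"

definition is_fpath :: "('e \<Rightarrow> 'v) \<Rightarrow> ('e \<Rightarrow> 'v) \<Rightarrow> ('v,'e) fpath \<Rightarrow> bool" where
  "is_fpath r s p \<equiv> (snd p \<noteq> [] \<longrightarrow> r (hd (snd p)) = fst p) \<and>
     (\<forall>i. Suc i < length (snd p) \<longrightarrow> s (snd p ! i) = r (snd p ! Suc i))"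

definition psrc :: "('e \<Rightarrow> 'v) \<Rightarrow> ('v,'e) fpath \<Rightarrow> 'v" where
  "psrc s p = (if snd p = [] then fst p else s (last (snd p)))"

definition pconcat :: "('v,'e) fpath \<Rightarrow> ('v,'e) fpath \<Rightarrow> ('v,'e) fpath" where
  "pconcat p q = (fst p, snd p @ snd q)"

fun act_list :: "('g \<Rightarrow> 'e \<Rightarrow> 'e) \<Rightarrow> ('g \<Rightarrow> 'e \<Rightarrow> 'g) \<Rightarrow> 'g \<Rightarrow> 'e list \<Rightarrow> 'e list" where
  "act_list ae phi g [] = []"
| "act_list ae phi g (a # as) = ae g a # act_list ae phi (phi g a) as"

fun phi_list :: "('g \<Rightarrow> 'e \<Rightarrow> 'g) \<Rightarrow> 'g \<Rightarrow> 'e list \<Rightarrow> 'g" where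
  "phi_list phi g [] = g"
| "phi_list phi g (a # as) = phi_list phi (phi g a) as"

definition act_path :: "('g \<Rightarrow> 'v \<Rightarrow> 'v) \<Rightarrow> ('g \<Rightarrow> 'e \<Rightarrow> 'e) \<Rightarrow> ('g \<Rightarrow> 'e \<Rightarrow> 'g)
    \<Rightarrow> 'g \<Rightarrow> ('v,'e) fpath \<Rightarrow> ('v,'e) fpath" where
  "act_path av ae phi g p = (av g (fst p), act_list ae phi g (snd p))"

definition phi_path :: "('g \<Rightarrow> 'e \<Rightarrow> 'g) \<Rightarrow> 'g \<Rightarrow> ('v,'e) fpath \<Rightarrow> 'g" where
  "phi_path phi g p = phi_list phi g (snd p)"

definition graph_action :: "'g monoid \<Rightarrow> ('e \<Rightarrow> 'v) \<Rightarrow> ('e \<Rightarrow> 'v)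
    \<Rightarrow> ('g \<Rightarrow> 'v \<Rightarrow> 'v) \<Rightarrow> ('g \<Rightarrow> 'e \<Rightarrow> 'e) \<Rightarrow> bool" where
  "graph_action G r s av ae \<equiv>
     av \<one>\<^bsub>G\<^esub> = id \<and> ae \<one>\<^bsub>G\<^esub> = id \<and>
     (\<forall>g\<in>carrier G. \<forall>h\<in>carrier G. av (g \<otimes>\<^bsub>G\<^esub> h) = av g \<circ> av h \<and> ae (g \<otimes>\<^bsub>G\<^esub> h) = ae g \<circ> ae h) \<and>
     (\<forall>g\<in>carrier G. bij (av g) \<and> bij (ae g)) \<and>
     (\<forall>g\<in>carrier G. \<forall>a. s (ae g a) = av g (s a) \<and> r (ae g a) = av g (r a))"

definition one_cocycle :: "'g monoid \<Rightarrow> ('g \<Rightarrow> 'e \<Rightarrow> 'e) \<Rightarrow> ('g \<Rightarrow> 'e \<Rightarrow> 'g) \<Rightarrow> bool" where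
  "one_cocycle G ae phi \<equiv>
     (\<forall>g\<in>carrier G. \<forall>a. phi g a \<in> carrier G) \<and>
     (\<forall>g\<in>carrier G. \<forall>h\<in>carrier G. \<forall>a.
        phi (g \<otimes>\<^bsub>G\<^esub> h) a = phi g (ae h a) \<otimes>\<^bsub>G\<^esub> phi h a)"

definition strongly_fixed :: "'g monoid \<Rightarrow> ('g \<Rightarrow> 'v \<Rightarrow> 'v) \<Rightarrow> ('g \<Rightarrow> 'e \<Rightarrow> 'e) \<Rightarrow> ('g \<Rightarrow> 'e \<Rightarrow> 'g)
    \<Rightarrow> 'g \<Rightarrow> ('v,'e) fpath \<Rightarrow> bool" where
  "strongly_fixed G av ae phi g p \<equiv> act_path av ae phi g p = p \<and> phi_path phi g p = \<one>\<^bsub>G\<^esub>"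

definition min_strongly_fixed :: "'g monoid \<Rightarrow> ('e \<Rightarrow> 'v) \<Rightarrow> ('e \<Rightarrow> 'v) \<Rightarrow> ('g \<Rightarrow> 'v \<Rightarrow> 'v)
    \<Rightarrow> ('g \<Rightarrow> 'e \<Rightarrow> 'e) \<Rightarrow> ('g \<Rightarrow> 'e \<Rightarrow> 'g) \<Rightarrow> 'g \<Rightarrow> ('v,'e) fpath \<Rightarrow> bool" where
  "min_strongly_fixed G r s av ae phi g p \<equiv>
     is_fpath r s p \<and> strongly_fixed G av ae phi g p \<and>
     (\<forall>k < length (snd p). \<not> strongly_fixed G av ae phi g (fst p, take k (snd p)))"

definition is_ipath :: "('e \<Rightarrow> 'v) \<Rightarrow> ('e \<Rightarrow> 'v) \<Rightarrow> (nat \<Rightarrow> 'e) \<Rightarrow> bool" where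
  "is_ipath r s \<xi> \<equiv> (\<forall>i. s (\<xi> i) = r (\<xi> (Suc i)))"

definition cyl :: "('e \<Rightarrow> 'v) \<Rightarrow> ('e \<Rightarrow> 'v) \<Rightarrow> ('v,'e) fpath \<Rightarrow> (nat \<Rightarrow> 'e) set" where
  "cyl r s \<gamma> = {\<xi>. is_ipath r s \<xi> \<and> r (\<xi> 0) = fst \<gamma> \<and> (\<forall>i < length (snd \<gamma>). \<xi> i = snd \<gamma> ! i)}"

text \<open>The inverse semigroup S_{G,E}: nonzero elements are triples (alpha,g,beta);
  the zero element is represented by None in products.\<close>

type_synonym ('v,'e,'g) selt = "('v,'e) fpath \<times> 'g \<times> ('v,'e) fpath"

definition valid_S :: "'g monoid \<Rightarrow> ('e \<Rightarrow> 'v) \<Rightarrow> ('e \<Rightarrow> 'v) \<Rightarrow> ('g \<Rightarrow> 'v \<Rightarrow> 'v)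
    \<Rightarrow> ('v,'e,'g) selt \<Rightarrow> bool" where
  "valid_S G r s av t \<equiv> (case t of (\<alpha>, g, \<beta>) \<Rightarrow>
     is_fpath r s \<alpha> \<and> is_fpath r s \<beta> \<and> g \<in> carrier G \<and> psrc s \<alpha> = av g (psrc s \<beta>))"

definition is_ext :: "('e \<Rightarrow> 'v) \<Rightarrow> ('e \<Rightarrow> 'v) \<Rightarrow> ('v,'e) fpath \<Rightarrow> ('v,'e) fpath \<Rightarrow> ('v,'e) fpath \<Rightarrow> bool" where
  "is_ext r s \<beta> \<gamma> \<epsilon> \<equiv> is_fpath r s \<epsilon> \<and> fst \<epsilon> = psrc s \<gamma> \<and> \<beta> = pconcat \<gamma> \<epsilon>"

definition sprod :: "'g monoid \<Rightarrow> ('e \<Rightarrow> 'v) \<Rightarrow> ('e \<Rightarrow> 'v) \<Rightarrow> ('g \<Rightarrow> 'v \<Rightarrow> 'v)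
    \<Rightarrow> ('g \<Rightarrow> 'e \<Rightarrow> 'e) \<Rightarrow> ('g \<Rightarrow> 'e \<Rightarrow> 'g)
    \<Rightarrow> ('v,'e,'g) selt \<Rightarrow> ('v,'e,'g) selt \<Rightarrow> ('v,'e,'g) selt option" where
  "sprod G r s av ae phi t u = (case t of (\<alpha>, g, \<beta>) \<Rightarrow> case u of (\<gamma>, h, \<delta>) \<Rightarrow>
     if (\<exists>\<epsilon>. is_ext r s \<beta> \<gamma> \<epsilon>) then
       (let \<epsilon> = (SOME \<epsilon>. is_ext r s \<beta> \<gamma> \<epsilon>) in
         Some (\<alpha>, g \<otimes>\<^bsub>G\<^esub> phi_path phi h \<epsilon>, pconcat \<delta> (act_path av ae phi (inv\<^bsub>G\<^esub> h) \<epsilon>)))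
     else if (\<exists>\<epsilon>. is_ext r s \<gamma> \<beta> \<epsilon>) then
       (let \<epsilon> = (SOME \<epsilon>. is_ext r s \<gamma> \<beta> \<epsilon>) in
         Some (pconcat \<alpha> (act_path av ae phi g \<epsilon>), phi_path phi g \<epsilon> \<otimes>\<^bsub>G\<^esub> h, \<delta>))
     else None)"

definition germ_reps :: "'g monoid \<Rightarrow> ('e \<Rightarrow> 'v) \<Rightarrow> ('e \<Rightarrow> 'v) \<Rightarrow> ('g \<Rightarrow> 'v \<Rightarrow> 'v)
    \<Rightarrow> (('v,'e,'g) selt \<times> (nat \<Rightarrow> 'e)) set" where
  "germ_reps G r s av = {(t, \<xi>). valid_S G r s av t \<and> \<xi> \<in> cyl r s (snd (snd t))}"

definition germ_rel :: "'g monoid \<Rightarrow> ('e \<Rightarrow> 'v) \<Rightarrow> ('e \<Rightarrow> 'v) \<Rightarrow> ('g \<Rightarrow> 'v \<Rightarrow> 'v)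
    \<Rightarrow> ('g \<Rightarrow> 'e \<Rightarrow> 'e) \<Rightarrow> ('g \<Rightarrow> 'e \<Rightarrow> 'g)
    \<Rightarrow> ((('v,'e,'g) selt \<times> (nat \<Rightarrow> 'e)) \<times> (('v,'e,'g) selt \<times> (nat \<Rightarrow> 'e))) set" where
  "germ_rel G r s av ae phi = {((t, \<xi>), (u, \<mu>)).
     (t, \<xi>) \<in> germ_reps G r s av \<and> (u, \<mu>) \<in> germ_reps G r s av \<and> \<xi> = \<mu> \<and>
     (\<exists>\<gamma>. is_fpath r s \<gamma> \<and> \<xi> \<in> cyl r s \<gamma> \<and>
        sprod G r s av ae phi t (\<gamma>, \<one>\<^bsub>G\<^esub>, \<gamma>) = sprod G r s av ae phi u (\<gamma>, \<one>\<^bsub>G\<^esub>, \<gamma>))}"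

definition germ :: "'g monoid \<Rightarrow> ('e \<Rightarrow> 'v) \<Rightarrow> ('e \<Rightarrow> 'v) \<Rightarrow> ('g \<Rightarrow> 'v \<Rightarrow> 'v)
    \<Rightarrow> ('g \<Rightarrow> 'e \<Rightarrow> 'e) \<Rightarrow> ('g \<Rightarrow> 'e \<Rightarrow> 'g)
    \<Rightarrow> ('v,'e,'g) selt \<Rightarrow> (nat \<Rightarrow> 'e) \<Rightarrow> (('v,'e,'g) selt \<times> (nat \<Rightarrow> 'e)) set" where
  "germ G r s av ae phi t \<xi> = germ_rel G r s av ae phi `` {(t, \<xi>)}"

definition tight_basic_opens :: "'g monoid \<Rightarrow> ('e \<Rightarrow> 'v) \<Rightarrow> ('e \<Rightarrow> 'v) \<Rightarrow> ('g \<Rightarrow> 'v \<Rightarrow> 'v)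
    \<Rightarrow> ('g \<Rightarrow> 'e \<Rightarrow> 'e) \<Rightarrow> ('g \<Rightarrow> 'e \<Rightarrow> 'g)
    \<Rightarrow> (('v,'e,'g) selt \<times> (nat \<Rightarrow> 'e)) set set set" where
  "tight_basic_opens G r s av ae phi =
     {{germ G r s av ae phi t \<xi> | \<xi>. \<xi> \<in> cyl r s (snd (snd t)) \<and> \<xi> \<in> cyl r s \<gamma>}
       | t \<gamma>. valid_S G r s av t \<and> is_fpath r s \<gamma>}"

definition tight_groupoid_topology :: "'g monoid \<Rightarrow> ('e \<Rightarrow> 'v) \<Rightarrow> ('e \<Rightarrow> 'v) \<Rightarrow> ('g \<Rightarrow> 'v \<Rightarrow> 'v)
    \<Rightarrow> ('g \<Rightarrow> 'e \<Rightarrow> 'e) \<Rightarrow> ('g \<Rightarrow> 'e \<Rightarrow> 'g)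
    \<Rightarrow> (('v,'e,'g) selt \<times> (nat \<Rightarrow> 'e)) set topology" where
  "tight_groupoid_topology G r s av ae phi =
     topology_generated_by (tight_basic_opens G r s av ae phi)"

end

theory Submission
  imports Defs
begin

lemma act_list_append:
  "act_list ae phi g (xs @ ys) = act_list ae phi g xs @ act_list ae phi (phi_list phi g xs) ys"
  by (induction xs arbitrary: g) auto

lemma phi_list_append:
  "phi_list phi g (xs @ ys) = phi_list phi (phi_list phi g xs) ys"
  by (induction xs arbitrary: g) auto

lemma length_act_list[simp]: "length (act_list ae phi g xs) = length xs"
  by (induction xs arbitrary: g) auto

lemma take_act_list: "take n (act_list ae phi g xs) = act_list ae phi g (take n xs)"
  by (induction xs arbitrary: g n) (auto simp: take_Cons split: nat.splits)

locale SSG = group G for G :: "'g monoid" (structure) +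
  fixes r s :: "'e \<Rightarrow> 'v" and av :: "'g \<Rightarrow> 'v \<Rightarrow> 'v" and ae :: "'g \<Rightarrow> 'e \<Rightarrow> 'e"
    and phi :: "'g \<Rightarrow> 'e \<Rightarrow> 'g"
  assumes GA: "graph_action G r s av ae" and CC: "one_cocycle G ae phi"
    and RF: "row_finite_no_sources r"
begin

lemma phi_closed: "g \<in> carrier G \<Longrightarrow> phi g a \<in> carrier G"
  using CC unfolding one_cocycle_def by blast

lemma phi_mult: "g \<in> carrier G \<Longrightarrow> h \<in> carrier G \<Longrightarrow> phi (g \<otimes> h) a = phi g (ae h a) \<otimes> phi h a"
  using CC unfolding one_cocycle_def by blast

lemma ae_one: "ae \<one> = id" and av_one: "av \<one> = id"
  using GA unfolding graph_action_def by auto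

lemma ae_mult: "g \<in> carrier G \<Longrightarrow> h \<in> carrier G \<Longrightarrow> ae (g \<otimes> h) a = ae g (ae h a)"
  using GA unfolding graph_action_def by auto

lemma ae_inj: "g \<in> carrier G \<Longrightarrow> ae g a = ae g b \<Longrightarrow> a = b"
  using GA unfolding graph_action_def by (meson bij_def injD)

lemma r_ae: "g \<in> carrier G \<Longrightarrow> r (ae g a) = av g (r a)"
  using GA unfolding graph_action_def by auto

lemma phi_one: "phi \<one> a = \<one>"
proof -
  have c: "phi \<one> a \<in> carrier G" by (simp add: phi_closed)
  have "phi \<one> a = phi \<one> a \<otimes> phi \<one> a"
    using phi_mult[of \<one> \<one> a] by (simp add: ae_one)
  then show ?thesis using c
    by (metis l_cancel_one' one_closed r_one)
qed

lemma phi_list_closed: "g \<in> carrier G \<Longrightarrow> phi_list phi g l \<in> carrier G"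
  by (induction l arbitrary: g) (auto simp: phi_closed)

lemma phi_list_one[simp]: "phi_list phi \<one> l = \<one>"
  by (induction l) (auto simp: phi_one)

lemma act_list_one[simp]: "act_list ae phi \<one> l = l"
  by (induction l) (auto simp: phi_one ae_one)

lemma act_list_mult:
  "g \<in> carrier G \<Longrightarrow> k \<in> carrier G \<Longrightarrow>
   act_list ae phi (g \<otimes> k) l = act_list ae phi g (act_list ae phi k l) \<and>
   phi_list phi (g \<otimes> k) l = phi_list phi g (act_list ae phi k l) \<otimes> phi_list phi k l"
  by (induction l arbitrary: g k) (auto simp: ae_mult phi_mult phi_closed)

lemma act_list_inj:
  "g \<in> carrier G \<Longrightarrow> act_list ae phi g l = act_list ae phi g l' \<Longrightarrow> l = l'"
proof (induction l arbitrary: g l')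
  case Nil then show ?case by (cases l') auto
next
  case (Cons a l)
  then show ?case
  proof (cases l')
    case (Cons b l2)
    note lc = this
    with Cons.prems have "a = b" by (auto dest: ae_inj)
    with Cons.prems lc show ?thesis using Cons.IH[of "phi g b" l2] by (auto simp: phi_closed)
  qed auto
qed

definition SF' :: "'g \<Rightarrow> 'e list \<Rightarrow> bool" where
  "SF' k z \<longleftrightarrow> act_list ae phi k z = z \<and> phi_list phi k z = \<one>"

lemma cocycle_key:
  assumes h: "h \<in> carrier G" and h': "h' \<in> carrier G"
  shows "(act_list ae phi h z = act_list ae phi h' z \<and> phi_list phi h z = phi_list phi h' z)
      \<longleftrightarrow> SF' (inv h' \<otimes> h) z"
proof -
  define k where "k = inv h' \<otimes> h"
  have k: "k \<in> carrier G" using h h' by (simp add: k_def)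
  have hk: "h = h' \<otimes> k" using h h' by (simp add: k_def m_assoc[symmetric])
  have A: "act_list ae phi h z = act_list ae phi h' (act_list ae phi k z)"
   and B: "phi_list phi h z = phi_list phi h' (act_list ae phi k z) \<otimes> phi_list phi k z"
    using act_list_mult[OF h' k, of z] hk by auto
  show ?thesis unfolding k_def[symmetric] SF'_def
  proof
    assume L: "act_list ae phi h z = act_list ae phi h' z \<and> phi_list phi h z = phi_list phi h' z"
    then have 1: "act_list ae phi k z = z" using A act_list_inj[OF h'] by metis
    then have "phi_list phi h' z \<otimes> phi_list phi k z = phi_list phi h' z" using B L by simp
    then have "phi_list phi k z = \<one>"
      using phi_list_closed[OF h'] phi_list_closed[OF k] by (metis l_cancel_one')
    with 1 show "act_list ae phi k z = z \<and> phi_list phi k z = \<one>" by simp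
  next
    assume "act_list ae phi k z = z \<and> phi_list phi k z = \<one>"
    then show "act_list ae phi h z = act_list ae phi h' z \<and> phi_list phi h z = phi_list phi h' z"
      using A B phi_list_closed[OF h'] by simp
  qed
qed


definition gam :: "(nat \<Rightarrow> 'e) \<Rightarrow> nat \<Rightarrow> ('v,'e) fpath" where
  "gam \<xi> n = (r (\<xi> 0), map \<xi> [0..<n])"

lemma fpath_seg: "is_ipath r s \<xi> \<Longrightarrow> is_fpath r s (r (\<xi> a), map \<xi> [a..<c])"
  unfolding is_fpath_def is_ipath_def by (auto simp: hd_map)

lemma fpath_gam: "is_ipath r s \<xi> \<Longrightarrow> is_fpath r s (gam \<xi> n)"
  unfolding gam_def using fpath_seg[of \<xi> 0] by simp

lemma psrc_gam: assumes "is_ipath r s \<xi>" shows "psrc s (gam \<xi> n) = r (\<xi> n)"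
proof (cases n)
  case 0 then show ?thesis by (simp add: psrc_def gam_def)
next
  case (Suc k) then show ?thesis using assms by (simp add: psrc_def gam_def is_ipath_def)
qed

lemma gam_eq_iff: "gam \<xi>' n = gam \<xi> n \<longleftrightarrow> r (\<xi>' 0) = r (\<xi> 0) \<and> (\<forall>i<n. \<xi>' i = \<xi> i)"
  unfolding gam_def by (auto simp: map_eq_conv)

lemma gam_mono: "gam \<xi>' n = gam \<xi> n \<Longrightarrow> m \<le> n \<Longrightarrow> gam \<xi>' m = gam \<xi> m"
  unfolding gam_eq_iff by auto

lemma snd_gam[simp]: "snd (gam \<xi> n) = map \<xi> [0..<n]" and fst_gam[simp]: "fst (gam \<xi> n) = r (\<xi> 0)"
  by (auto simp: gam_def)

lemma cyl_iff: "\<xi> \<in> cyl r s \<gamma> \<longleftrightarrow> is_ipath r s \<xi> \<and> \<gamma> = gam \<xi> (length (snd \<gamma>))"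
proof -
  obtain a l where g: "\<gamma> = (a, l)" by (cases \<gamma>)
  have h: "(\<forall>i<length l. \<xi> i = l ! i) \<longleftrightarrow> l = map \<xi> [0..<length l]"
  proof
    assume "\<forall>i<length l. \<xi> i = l ! i"
    then show "l = map \<xi> [0..<length l]" by (intro nth_equalityI) auto
  next
    assume A: "l = map \<xi> [0..<length l]"
    show "\<forall>i<length l. \<xi> i = l ! i"
    proof (intro allI impI)
      fix i assume i: "i < length l"
      have "map \<xi> [0..<length l] ! i = \<xi> i" using i by simp
      then show "\<xi> i = l ! i" using A by metis
    qed
  qed
  have "\<xi> \<in> cyl r s \<gamma> \<longleftrightarrow> is_ipath r s \<xi> \<and> a = r (\<xi> 0) \<and> (\<forall>i<length l. \<xi> i = l ! i)"
    unfolding g cyl_def by auto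
  also have "\<dots> \<longleftrightarrow> is_ipath r s \<xi> \<and> a = r (\<xi> 0) \<and> l = map \<xi> [0..<length l]"
    by (simp only: h)
  also have "\<dots> \<longleftrightarrow> is_ipath r s \<xi> \<and> \<gamma> = gam \<xi> (length (snd \<gamma>))"
    unfolding g gam_def by (simp only: prod.inject snd_conv)
  finally show ?thesis .
qed

lemma cylD: "\<xi> \<in> cyl r s \<gamma> \<Longrightarrow> \<gamma> = gam \<xi> (length (snd \<gamma>))"
  using cyl_iff by blast

lemma cylD_ip: "\<xi> \<in> cyl r s \<gamma> \<Longrightarrow> is_ipath r s \<xi>"
  using cyl_iff by blast

lemma cyl_gam: "\<xi>' \<in> cyl r s (gam \<xi> n) \<longleftrightarrow> is_ipath r s \<xi>' \<and> gam \<xi>' n = gam \<xi> n"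
  unfolding cyl_iff by auto

definition ext :: "('v,'e,'g) selt \<Rightarrow> (nat \<Rightarrow> 'e) \<Rightarrow> nat \<Rightarrow> ('v,'e,'g) selt" where
  "ext t \<xi> m = (case t of (\<alpha>, g, \<beta>) \<Rightarrow>
     ((fst \<alpha>, snd \<alpha> @ act_list ae phi g (map \<xi> [length (snd \<beta>)..<m])),
      phi_list phi g (map \<xi> [length (snd \<beta>)..<m]), gam \<xi> m))"

lemma ext_comp:
  assumes "length (snd \<beta>) \<le> n" "n \<le> m"
  shows "ext (ext (\<alpha>, g, \<beta>) \<xi> n) \<xi> m = ext (\<alpha>, g, \<beta>) \<xi> m"
proof -
  define b where "b = length (snd \<beta>)"
  define D where "D = map \<xi> [b..<n]"
  define E where "E = map \<xi> [n..<m]"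
  have "[b..<m] = [b..<n] @ [n..<m]"
    using assms upt_add_eq_append[of b n "m - n"] unfolding b_def by simp
  then have e: "map \<xi> [b..<m] = D @ E" unfolding D_def E_def by simp
  have inner: "ext (\<alpha>, g, \<beta>) \<xi> n = ((fst \<alpha>, snd \<alpha> @ act_list ae phi g D), phi_list phi g D, gam \<xi> n)"
    unfolding ext_def D_def b_def by simp
  have outer: "ext ((fst \<alpha>, snd \<alpha> @ act_list ae phi g D), phi_list phi g D, gam \<xi> n) \<xi> m =
     ((fst \<alpha>, (snd \<alpha> @ act_list ae phi g D) @ act_list ae phi (phi_list phi g D) E),
       phi_list phi (phi_list phi g D) E, gam \<xi> m)"
    unfolding ext_def E_def by simp
  have rhs: "ext (\<alpha>, g, \<beta>) \<xi> m = ((fst \<alpha>, snd \<alpha> @ act_list ae phi g (D @ E)), phi_list phi g (D @ E), gam \<xi> m)"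
    unfolding ext_def using e by (simp add: b_def)
  show ?thesis unfolding inner outer rhs act_list_append phi_list_append by simp
qed

lemma ext_local: assumes "gam \<xi>' n = gam \<xi> n" shows "ext t \<xi>' n = ext t \<xi> n"
proof -
  have "\<forall>i<n. \<xi>' i = \<xi> i" using assms gam_eq_iff by blast
  then have m: "map \<xi>' [a..<n] = map \<xi> [a..<n]" for a by (intro map_cong) auto
  obtain \<alpha> g \<beta> where t: "t = (\<alpha>, g, \<beta>)" by (cases t) auto
  show ?thesis unfolding t ext_def by (simp only: m assms prod.case)
qed


lemma is_ext_eq: "is_ext r s \<beta> \<gamma> \<epsilon> \<Longrightarrow> \<epsilon> = (psrc s \<gamma>, drop (length (snd \<gamma>)) (snd \<beta>))"
  by (cases \<epsilon>) (auto simp: is_ext_def pconcat_def)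

lemma some_ext: "is_ext r s \<beta> \<gamma> \<epsilon>0 \<Longrightarrow> (SOME \<epsilon>. is_ext r s \<beta> \<gamma> \<epsilon>) = \<epsilon>0"
  by (metis (no_types, lifting) is_ext_eq someI)

lemma sprod_ge:
  assumes v: "valid_S G r s av (\<alpha>, g, \<beta>)" and x: "\<xi> \<in> cyl r s \<beta>" and le: "length (snd \<beta>) \<le> m"
  shows "sprod G r s av ae phi (\<alpha>, g, \<beta>) (gam \<xi> m, \<one>, gam \<xi> m) = Some (ext (\<alpha>, g, \<beta>) \<xi> m)"
proof -
  define b where "b = length (snd \<beta>)"
  have ip: "is_ipath r s \<xi>" using cylD_ip[OF x] .
  have bg: "\<beta> = gam \<xi> b" unfolding b_def by (rule cylD[OF x])
  have g: "g \<in> carrier G" using v by (simp add: valid_S_def)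
  show ?thesis
  proof (cases "m = b")
    case True
    then have gb: "gam \<xi> m = \<beta>" using bg by simp
    have ise: "is_ext r s \<beta> (gam \<xi> m) (psrc s \<beta>, [])"
      unfolding gb is_ext_def pconcat_def by (simp add: is_fpath_def)
    have "sprod G r s av ae phi (\<alpha>, g, \<beta>) (gam \<xi> m, \<one>, gam \<xi> m) = Some (\<alpha>, g, \<beta>)"
      unfolding sprod_def using ise some_ext[OF ise] g
      by (auto simp: Let_def phi_path_def act_path_def pconcat_def gb)
    moreover have "ext (\<alpha>, g, \<beta>) \<xi> m = (\<alpha>, g, \<beta>)"
      unfolding ext_def using True gb b_def by simp
    ultimately show ?thesis by simp
  next
    case False
    then have lt: "b < m" using le b_def by simp
    have nex: "\<not> (\<exists>\<epsilon>. is_ext r s \<beta> (gam \<xi> m) \<epsilon>)"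
    proof
      assume "\<exists>\<epsilon>. is_ext r s \<beta> (gam \<xi> m) \<epsilon>"
      then obtain \<epsilon> where "\<beta> = pconcat (gam \<xi> m) \<epsilon>" unfolding is_ext_def by blast
      then have "length (snd \<beta>) \<ge> m" by (simp add: pconcat_def)
      then show False using lt b_def by simp
    qed
    define \<epsilon>0 where "\<epsilon>0 = (psrc s \<beta>, map \<xi> [b..<m])"
    have ps: "psrc s \<beta> = r (\<xi> b)" using bg psrc_gam[OF ip] by metis
    have "[0..<m] = [0..<b] @ [b..<m]" using lt upt_add_eq_append[of 0 b "m - b"] by simp
    then have "pconcat \<beta> \<epsilon>0 = gam \<xi> m" using bg unfolding \<epsilon>0_def pconcat_def gam_def by simp
    then have ise: "is_ext r s (gam \<xi> m) \<beta> \<epsilon>0"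
      unfolding is_ext_def using fpath_seg[OF ip, of b m] ps by (simp add: \<epsilon>0_def)
    have ex: "\<exists>\<epsilon>. is_ext r s (gam \<xi> m) \<beta> \<epsilon>" using ise by blast
    have "sprod G r s av ae phi (\<alpha>, g, \<beta>) (gam \<xi> m, \<one>, gam \<xi> m) =
        Some (pconcat \<alpha> (act_path av ae phi g \<epsilon>0), phi_path phi g \<epsilon>0 \<otimes> \<one>, gam \<xi> m)"
      unfolding sprod_def prod.case using nex ex
      by (simp only: if_False if_True Let_def some_ext[OF ise] simp_thms)
    also have "\<dots> = Some (ext (\<alpha>, g, \<beta>) \<xi> m)"
      unfolding ext_def pconcat_def act_path_def phi_path_def \<epsilon>0_def b_def
      using phi_list_closed[OF g] by simp
    finally show ?thesis .
  qed
qed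

lemma sprod_lt:
  assumes v: "valid_S G r s av (\<alpha>, g, \<beta>)" and x: "\<xi> \<in> cyl r s \<beta>" and lt: "m < length (snd \<beta>)"
  shows "sprod G r s av ae phi (\<alpha>, g, \<beta>) (gam \<xi> m, \<one>, gam \<xi> m) = Some (\<alpha>, g, \<beta>)"
proof -
  define b where "b = length (snd \<beta>)"
  have ip: "is_ipath r s \<xi>" using cylD_ip[OF x] .
  have bg: "\<beta> = gam \<xi> b" unfolding b_def by (rule cylD[OF x])
  have g: "g \<in> carrier G" using v by (simp add: valid_S_def)
  define \<epsilon>0 where "\<epsilon>0 = (r (\<xi> m), map \<xi> [m..<b])"
  have "[0..<b] = [0..<m] @ [m..<b]" using lt b_def upt_add_eq_append[of 0 m "b - m"] by simp
  then have pc: "pconcat (gam \<xi> m) \<epsilon>0 = \<beta>" using bg unfolding \<epsilon>0_def pconcat_def gam_def by simp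
  then have ise: "is_ext r s \<beta> (gam \<xi> m) \<epsilon>0"
    unfolding is_ext_def using fpath_seg[OF ip, of m b] psrc_gam[OF ip, of m] by (simp add: \<epsilon>0_def)
  have ex: "\<exists>\<epsilon>. is_ext r s \<beta> (gam \<xi> m) \<epsilon>" using ise by blast
  have "sprod G r s av ae phi (\<alpha>, g, \<beta>) (gam \<xi> m, \<one>, gam \<xi> m) =
      Some (\<alpha>, g \<otimes> phi_path phi \<one> \<epsilon>0, pconcat (gam \<xi> m) (act_path av ae phi (inv \<one>) \<epsilon>0))"
    unfolding sprod_def prod.case using ex
    by (simp only: if_False if_True Let_def some_ext[OF ise] simp_thms)
  also have "\<dots> = Some (\<alpha>, g, \<beta>)"
    using pc g unfolding phi_path_def act_path_def pconcat_def by simp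
  finally show ?thesis .
qed


abbreviation "REPS \<equiv> germ_reps G r s av"
abbreviation "GERM \<equiv> germ G r s av ae phi"
abbreviation "GREL \<equiv> germ_rel G r s av ae phi"
abbreviation "CYL \<equiv> cyl r s"

definition blen :: "('v,'e,'g) selt \<Rightarrow> nat" where "blen t = length (snd (snd (snd t)))"

definition ev :: "('v,'e,'g) selt \<Rightarrow> ('v,'e,'g) selt \<Rightarrow> (nat \<Rightarrow> 'e) \<Rightarrow> bool" where
  "ev t u \<xi> \<longleftrightarrow> (\<exists>n. \<forall>m\<ge>n. ext t \<xi> m = ext u \<xi> m)"

lemma blen_ext[simp]: "blen (ext t \<xi> n) = n"
  unfolding blen_def ext_def by (cases t) (auto simp: gam_def)

lemma ext_comp': "blen t \<le> n \<Longrightarrow> n \<le> m \<Longrightarrow> ext (ext t \<xi> n) \<xi> m = ext t \<xi> m"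
  unfolding blen_def by (cases t) (simp add: ext_comp)

lemma ext_eq_prop:
  assumes "ext t \<xi> n = ext u \<xi> n" "blen t \<le> n" "blen u \<le> n" "n \<le> m"
  shows "ext t \<xi> m = ext u \<xi> m"
  using ext_comp'[of t n m \<xi>] ext_comp'[of u n m \<xi>] assms by simp

lemma reps_iff: "(t, \<xi>) \<in> REPS \<longleftrightarrow> valid_S G r s av t \<and> \<xi> \<in> CYL (snd (snd t))"
  by (simp add: germ_reps_def)

lemma sprod_gam:
  assumes "(t, \<xi>) \<in> REPS"
  shows "sprod G r s av ae phi t (gam \<xi> m, \<one>, gam \<xi> m) = Some (if m < blen t then t else ext t \<xi> m)"
proof -
  obtain \<alpha> g \<beta> where t: "t = (\<alpha>, g, \<beta>)" by (cases t) auto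
  show ?thesis using assms sprod_ge[of \<alpha> g \<beta> \<xi> m] sprod_lt[of \<alpha> g \<beta> \<xi> m]
    unfolding t reps_iff blen_def by auto
qed

lemma ev_refl: "ev t t \<xi>" unfolding ev_def by auto
lemma ev_sym: "ev t u \<xi> \<Longrightarrow> ev u t \<xi>" unfolding ev_def by metis
lemma ev_trans: "ev t u \<xi> \<Longrightarrow> ev u w \<xi> \<Longrightarrow> ev t w \<xi>"
  unfolding ev_def by (metis max.cobounded1 max.cobounded2 order_trans)

lemma germ_rel_iff:
  assumes A: "(t, \<xi>) \<in> REPS" and B: "(u, \<mu>) \<in> REPS"
  shows "((t, \<xi>), (u, \<mu>)) \<in> GREL \<longleftrightarrow> \<xi> = \<mu> \<and> ev t u \<xi>"
proof
  assume "((t, \<xi>), (u, \<mu>)) \<in> GREL"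
  then have eq: "\<xi> = \<mu>" and "\<exists>\<gamma>. is_fpath r s \<gamma> \<and> \<xi> \<in> CYL \<gamma> \<and>
        sprod G r s av ae phi t (\<gamma>, \<one>, \<gamma>) = sprod G r s av ae phi u (\<gamma>, \<one>, \<gamma>)"
    unfolding germ_rel_def by auto
  then obtain \<gamma> where c: "\<xi> \<in> CYL \<gamma>" and
    sp: "sprod G r s av ae phi t (\<gamma>, \<one>, \<gamma>) = sprod G r s av ae phi u (\<gamma>, \<one>, \<gamma>)" by blast
  define n where "n = length (snd \<gamma>)"
  have gg: "\<gamma> = gam \<xi> n" unfolding n_def by (rule cylD[OF c])
  have B': "(u, \<xi>) \<in> REPS" using B eq by simp
  have s1: "sprod G r s av ae phi t (\<gamma>, \<one>, \<gamma>) = Some (if n < blen t then t else ext t \<xi> n)"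
    unfolding gg by (rule sprod_gam[OF A])
  have s2: "sprod G r s av ae phi u (\<gamma>, \<one>, \<gamma>) = Some (if n < blen u then u else ext u \<xi> n)"
    unfolding gg by (rule sprod_gam[OF B'])
  have "Some (if n < blen t then t else ext t \<xi> n) = Some (if n < blen u then u else ext u \<xi> n)"
    using sp unfolding s1 s2 .
  then have e: "(if n < blen t then t else ext t \<xi> n) = (if n < blen u then u else ext u \<xi> n)"
    by (rule option.inject[THEN iffD1])
  have "ev t u \<xi>"
  proof (cases "n < blen t")
    case True
    show ?thesis
    proof (cases "n < blen u")
      case True
      with e \<open>n < blen t\<close> show ?thesis by (simp add: ev_refl)
    next
      case False
      with e \<open>n < blen t\<close> have "t = ext u \<xi> n" by simp
      then have "blen t = n" by simp
      with True show ?thesis by simp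
    qed
  next
    case False
    show ?thesis
    proof (cases "n < blen u")
      case True
      with e False have "u = ext t \<xi> n" by simp
      then have "blen u = n" by simp
      with True show ?thesis by simp
    next
      case F2: False
      with e False have "ext t \<xi> n = ext u \<xi> n" by simp
      then show ?thesis unfolding ev_def using ext_eq_prop False F2 by (metis not_less)
    qed
  qed
  with eq show "\<xi> = \<mu> \<and> ev t u \<xi>" by simp
next
  assume "\<xi> = \<mu> \<and> ev t u \<xi>"
  then have eq: "\<xi> = \<mu>" and "ev t u \<xi>" by auto
  then obtain n where n: "\<forall>m\<ge>n. ext t \<xi> m = ext u \<xi> m" unfolding ev_def by blast
  define m where "m = max n (max (blen t) (blen u))"
  have ip: "is_ipath r s \<xi>" using A reps_iff cyl_iff by blast
  have "sprod G r s av ae phi t (gam \<xi> m, \<one>, gam \<xi> m) = sprod G r s av ae phi u (gam \<xi> m, \<one>, gam \<xi> m)"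
    using sprod_gam[OF A, of m] sprod_gam[OF B, of m] eq n m_def by simp
  moreover have "is_fpath r s (gam \<xi> m)" "\<xi> \<in> CYL (gam \<xi> m)" using ip fpath_gam cyl_gam by auto
  ultimately show "((t, \<xi>), (u, \<mu>)) \<in> GREL" unfolding germ_rel_def using A B eq by blast
qed

lemma germ_mem: "p \<in> GERM t \<xi> \<longleftrightarrow> ((t, \<xi>), p) \<in> GREL"
  by (simp add: germ_def)

lemma germ_rel_reps: "(a, b) \<in> GREL \<Longrightarrow> a \<in> REPS \<and> b \<in> REPS"
  unfolding germ_rel_def by auto

lemma self_in_germ: "(t, \<xi>) \<in> REPS \<Longrightarrow> (t, \<xi>) \<in> GERM t \<xi>"
  by (simp add: germ_mem germ_rel_iff ev_refl)

lemma germ_eq_D: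
  assumes "(t, \<xi>) \<in> REPS" "(u, \<mu>) \<in> REPS" "GERM t \<xi> = GERM u \<mu>"
  shows "\<xi> = \<mu> \<and> ev t u \<xi>"
proof -
  have "(t, \<xi>) \<in> GERM u \<mu>" using assms self_in_germ by blast
  then have "\<mu> = \<xi> \<and> ev u t \<mu>" using germ_rel_iff assms germ_mem by blast
  then show ?thesis using ev_sym by blast
qed

lemma germ_eqI:
  assumes "(t, \<xi>) \<in> REPS" "(u, \<xi>) \<in> REPS" "ev t u \<xi>"
  shows "GERM t \<xi> = GERM u \<xi>"
proof -
  have "p \<in> GERM t \<xi> \<longleftrightarrow> p \<in> GERM u \<xi>" for p
  proof -
    obtain w \<zeta> where p: "p = (w, \<zeta>)" by (cases p) auto
    show ?thesis
    proof (cases "(w, \<zeta>) \<in> REPS")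
      case True
      then show ?thesis unfolding p germ_mem using germ_rel_iff[OF assms(1) True] germ_rel_iff[OF assms(2) True]
        ev_sym ev_trans assms(3) by blast
    next
      case False
      then show ?thesis unfolding p germ_mem using germ_rel_reps by blast
    qed
  qed
  then show ?thesis by blast
qed


abbreviation "BO \<equiv> tight_basic_opens G r s av ae phi"

definition B :: "('v,'e,'g) selt \<Rightarrow> ('v,'e) fpath \<Rightarrow> (('v,'e,'g) selt \<times> (nat \<Rightarrow> 'e)) set set" where
  "B t \<gamma> = {GERM t \<xi> | \<xi>. \<xi> \<in> CYL (snd (snd t)) \<and> \<xi> \<in> CYL \<gamma>}"

lemma BO_eq: "BO = {B t \<gamma> | t \<gamma>. valid_S G r s av t \<and> is_fpath r s \<gamma>}"
  unfolding tight_basic_opens_def B_def by simp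

lemma cyl_shift: "\<xi> \<in> CYL \<gamma> \<Longrightarrow> \<xi>' \<in> CYL (gam \<xi> n) \<Longrightarrow> length (snd \<gamma>) \<le> n \<Longrightarrow> \<xi>' \<in> CYL \<gamma>"
  unfolding cyl_gam by (metis cyl_iff gam_mono)

lemma cyl_gam_mono: "\<xi>' \<in> CYL (gam \<xi> n) \<Longrightarrow> m \<le> n \<Longrightarrow> \<xi>' \<in> CYL (gam \<xi> m)"
  unfolding cyl_gam using gam_mono by blast

lemma ext_trd[simp]: "snd (snd (ext t \<xi> n)) = gam \<xi> n"
  unfolding ext_def by (cases t) auto

lemma ext_snd_closed: "valid_S G r s av t \<Longrightarrow> fst (snd (ext t \<xi> n)) \<in> carrier G"
  unfolding ext_def valid_S_def by (cases t) (auto simp: phi_list_closed)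

lemma ev_shift:
  assumes "ext t \<xi> n = ext u \<xi> n" "blen t \<le> n" "blen u \<le> n" "gam \<xi>' n = gam \<xi> n"
  shows "ev t u \<xi>'"
proof -
  have "ext t \<xi>' m = ext u \<xi>' m" if "m \<ge> n" for m
  proof -
    have "ext t \<xi>' m = ext (ext t \<xi>' n) \<xi>' m" using ext_comp' assms that by simp
    also have "\<dots> = ext (ext u \<xi>' n) \<xi>' m" using ext_local[OF assms(4)] assms(1) by simp
    also have "\<dots> = ext u \<xi>' m" using ext_comp' assms that by simp
    finally show ?thesis .
  qed
  then show ?thesis unfolding ev_def by blast
qed

lemma nbhd:
  assumes "generate_topology_on BO U"
  shows "(t, \<xi>) \<in> REPS \<Longrightarrow> GERM t \<xi> \<in> U \<Longrightarrow> \<exists>n. \<forall>\<xi>'. \<xi>' \<in> CYL (gam \<xi> n) \<longrightarrow> GERM t \<xi>' \<in> U"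
  using assms
proof (induction arbitrary: t \<xi>)
  case Empty
  then show ?case by simp
next
  case (Int a b)
  then obtain n1 n2 where "\<forall>\<xi>'. \<xi>' \<in> CYL (gam \<xi> n1) \<longrightarrow> GERM t \<xi>' \<in> a"
    "\<forall>\<xi>'. \<xi>' \<in> CYL (gam \<xi> n2) \<longrightarrow> GERM t \<xi>' \<in> b" by blast
  then show ?case using cyl_gam_mono[of _ \<xi> "max n1 n2"] by (metis IntI max.cobounded1 max.cobounded2)
next
  case (UN K)
  then obtain k where "k \<in> K" "GERM t \<xi> \<in> k" by blast
  with UN show ?case by blast
next
  case (Basis S)
  then obtain t' \<gamma>' where S: "S = B t' \<gamma>'" and vt': "valid_S G r s av t'" "is_fpath r s \<gamma>'"
    unfolding BO_eq by blast
  with Basis obtain \<xi>1 where g1: "GERM t \<xi> = GERM t' \<xi>1" and c1: "\<xi>1 \<in> CYL (snd (snd t'))" "\<xi>1 \<in> CYL \<gamma>'"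
    unfolding B_def by blast
  have r1: "(t', \<xi>1) \<in> REPS" using vt' c1 reps_iff by blast
  from germ_eq_D[OF Basis(2) r1 g1] have x1: "\<xi>1 = \<xi>" and "ev t t' \<xi>" by auto
  then obtain n0 where n0: "\<forall>m\<ge>n0. ext t \<xi> m = ext t' \<xi> m" unfolding ev_def by blast
  define n where "n = max n0 (max (blen t) (max (blen t') (length (snd \<gamma>'))))"
  have "GERM t \<xi>' \<in> S" if x': "\<xi>' \<in> CYL (gam \<xi> n)" for \<xi>'
  proof -
    have "\<xi>' \<in> CYL (snd (snd t'))" using cyl_shift[OF c1(1)[unfolded x1] x'] n_def blen_def by simp
    moreover have "\<xi>' \<in> CYL \<gamma>'" using cyl_shift[OF c1(2)[unfolded x1] x'] n_def by simp
    moreover have "\<xi>' \<in> CYL (snd (snd t))" using cyl_shift[OF _ x'] Basis(2) reps_iff n_def blen_def by simp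
    moreover have "ev t t' \<xi>'"
      using ev_shift[of t \<xi> n t' \<xi>'] n0 n_def x' cyl_gam by simp
    ultimately have "GERM t \<xi>' = GERM t' \<xi>'" "(t', \<xi>') \<in> REPS"
      using germ_eqI reps_iff Basis(2) vt' by blast+
    then show ?thesis unfolding S B_def using \<open>\<xi>' \<in> CYL (snd (snd t'))\<close> \<open>\<xi>' \<in> CYL \<gamma>'\<close> by blast
  qed
  then show ?case by blast
qed


lemma ext_formula:
  assumes "ext t \<xi> N = (A1, h, c1)" "blen t \<le> N" "gam \<xi>' N = gam \<xi> N" "N \<le> m"
  shows "ext t \<xi>' m = ((fst A1, snd A1 @ act_list ae phi h (map \<xi>' [N..<m])), phi_list phi h (map \<xi>' [N..<m]), gam \<xi>' m)"
proof -
  have c1: "c1 = gam \<xi> N" using ext_trd[of t \<xi> N] assms(1) by simp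
  have "ext t \<xi>' m = ext (ext t \<xi>' N) \<xi>' m" using ext_comp' assms by simp
  also have "\<dots> = ext (A1, h, gam \<xi> N) \<xi>' m" using ext_local[OF assms(3)] assms(1) c1 by simp
  finally show ?thesis unfolding ext_def by simp
qed

lemma SF'_nil: "SF' k [] \<longleftrightarrow> k = \<one>"
  unfolding SF'_def by simp

lemma take_map_upt: assumes "j \<le> m - N" shows "take j (map \<xi> [N..<m]) = map \<xi> [N..<N+j]"
proof (cases "j = 0")
  case True then show ?thesis by simp
next
  case False then have "N + j \<le> m" using assms by simp
  then show ?thesis by (simp add: take_map take_upt)
qed

lemma sep:
  assumes H: "\<forall>g\<in>carrier G. \<forall>x. finite {p. min_strongly_fixed G r s av ae phi g p \<and> fst p = x}"
    and A: "(t, \<xi>) \<in> REPS" and Bu: "(u, \<xi>) \<in> REPS" and ne: "\<not> ev t u \<xi>"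
  shows "\<exists>n. \<forall>\<xi>'. \<xi>' \<in> CYL (gam \<xi> n) \<longrightarrow> \<not> ev t u \<xi>'"
proof -
  define N where "N = max (blen t) (blen u)"
  obtain A1 h c1 where a: "ext t \<xi> N = (A1, h, c1)" by (cases "ext t \<xi> N") auto
  obtain A2 h' c2 where b: "ext u \<xi> N = (A2, h', c2)" by (cases "ext u \<xi> N") auto
  have h: "h \<in> carrier G" using ext_snd_closed[of t \<xi> N] A reps_iff a by auto
  have h': "h' \<in> carrier G" using ext_snd_closed[of u \<xi> N] Bu reps_iff b by auto
  have ip: "is_ipath r s \<xi>" using A reps_iff cyl_iff by blast
  have Ft: "ext t \<xi>' m = ((fst A1, snd A1 @ act_list ae phi h (map \<xi>' [N..<m])), phi_list phi h (map \<xi>' [N..<m]), gam \<xi>' m)"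
    if "\<xi>' \<in> CYL (gam \<xi> N)" "N \<le> m" for \<xi>' m
    using ext_formula[OF a _ _ that(2)] that(1) cyl_gam N_def by simp
  have Fu: "ext u \<xi>' m = ((fst A2, snd A2 @ act_list ae phi h' (map \<xi>' [N..<m])), phi_list phi h' (map \<xi>' [N..<m]), gam \<xi>' m)"
    if "\<xi>' \<in> CYL (gam \<xi> N)" "N \<le> m" for \<xi>' m
    using ext_formula[OF b _ _ that(2)] that(1) cyl_gam N_def by simp
  have evD: "\<exists>m\<ge>n. ext t \<xi>' m = ext u \<xi>' m" if "ev t u \<xi>'" for \<xi>' n
    using that unfolding ev_def by (metis max.cobounded1 max.cobounded2)
  show ?thesis
  proof (cases "A1 = A2")
    case False
    have "\<not> ev t u \<xi>'" if x': "\<xi>' \<in> CYL (gam \<xi> N)" for \<xi>'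
    proof
      assume "ev t u \<xi>'"
      then obtain m where m: "m \<ge> N" "ext t \<xi>' m = ext u \<xi>' m" using evD by blast
      then have "fst A1 = fst A2" "snd A1 @ act_list ae phi h (map \<xi>' [N..<m]) = snd A2 @ act_list ae phi h' (map \<xi>' [N..<m])"
        using Ft[OF x' m(1)] Fu[OF x' m(1)] by auto
      then have "A1 = A2" by (simp add: append_eq_append_conv prod_eq_iff)
      with False show False by simp
    qed
    then show ?thesis by blast
  next
    case True
    define k where "k = inv h' \<otimes> h"
    have k: "k \<in> carrier G" using h h' k_def by simp
    have eqiff: "ext t \<xi>' m = ext u \<xi>' m \<longleftrightarrow> SF' k (map \<xi>' [N..<m])"
      if "\<xi>' \<in> CYL (gam \<xi> N)" "N \<le> m" for \<xi>' m
      using Ft[OF that] Fu[OF that] True cocycle_key[OF h h'] k_def by simp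
    have xN: "\<xi> \<in> CYL (gam \<xi> N)" using ip cyl_gam by simp
    have star: "\<not> SF' k (map \<xi> [N..<m])" if "N \<le> m" for m
    proof
      assume "SF' k (map \<xi> [N..<m])"
      then have "ext t \<xi> m = ext u \<xi> m" using eqiff[OF xN that] by simp
      then have "ev t u \<xi>" using ev_shift[of t \<xi> m u \<xi>] that N_def by simp
      with ne show False by simp
    qed
    have k1: "k \<noteq> \<one>" using star[of N] SF'_nil by simp
    define v where "v = r (\<xi> N)"
    define M where "M = {p. min_strongly_fixed G r s av ae phi k p \<and> fst p = v}"
    have "finite M" using H k M_def by blast
    then have "finite ((\<lambda>p. length (snd p)) ` M)" by (rule finite_imageI)
    then obtain L where "\<forall>n\<in>(\<lambda>p. length (snd p)) ` M. n < L" using finite_nat_set_iff_bounded by blast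
    then have L: "\<forall>p\<in>M. length (snd p) < L" by blast
    define n where "n = N + L + 1"
    have "\<not> ev t u \<xi>'" if x': "\<xi>' \<in> CYL (gam \<xi> n)" for \<xi>'
    proof
      assume "ev t u \<xi>'"
      then obtain m where m: "m \<ge> n" "ext t \<xi>' m = ext u \<xi>' m" using evD by blast
      have xN': "\<xi>' \<in> CYL (gam \<xi> N)" using cyl_gam_mono[OF x'] n_def by simp
      have ip': "is_ipath r s \<xi>'" using x' cyl_gam by blast
      have agree: "\<forall>i<n. \<xi>' i = \<xi> i" using x' cyl_gam gam_eq_iff by blast
      define Z where "Z = map \<xi>' [N..<m]"
      have SZ: "SF' k Z" using eqiff[OF xN'] m n_def Z_def by simp
      define j where "j = (LEAST j. SF' k (take j Z))"
      have Sj: "SF' k (take j Z)" unfolding j_def by (rule LeastI[of _ "length Z"]) (simp add: SZ)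
      have jle: "j \<le> length Z" unfolding j_def by (rule Least_le) (simp add: SZ)
      have jmin: "\<not> SF' k (take i Z)" if "i < j" for i using not_less_Least[OF that[unfolded j_def]] j_def by simp
      have j0: "j \<noteq> 0" using Sj k1 SF'_nil by (metis take0)
      have tZ: "take j Z = map \<xi>' [N..<N+j]" unfolding Z_def using jle Z_def take_map_upt by simp
      have vv: "r (\<xi>' N) = v" using agree n_def v_def by simp
      define p where "p = (v, take j Z)"
      have fp: "is_fpath r s p" unfolding p_def tZ using fpath_seg[OF ip', of N "N+j"] vv by simp
      have tc: "take j Z = \<xi>' N # map \<xi>' [Suc N..<N+j]" unfolding tZ using j0 by (simp add: upt_conv_Cons)
      have al: "act_list ae phi k (take j Z) = take j Z" using Sj unfolding SF'_def by (rule conjunct1)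
      have "ae k (\<xi>' N) = \<xi>' N" using al unfolding tc by simp
      then have "av k v = v" using r_ae[OF k, of "\<xi>' N"] vv by simp
      then have sfp: "strongly_fixed G av ae phi k p"
        using Sj unfolding strongly_fixed_def p_def act_path_def phi_path_def SF'_def by simp
      have "\<not> strongly_fixed G av ae phi k (fst p, take i (snd p))" if "i < length (snd p)" for i
      proof
        assume a: "strongly_fixed G av ae phi k (fst p, take i (snd p))"
        have ij: "i < j" using that jle p_def by simp
        have tt: "take i (snd p) = take i Z" using ij p_def by (simp add: min_def)
        have "SF' k (take i Z)"
          using a unfolding strongly_fixed_def act_path_def phi_path_def SF'_def tt by simp
        then show False using jmin ij by simp
      qed
      then have "p \<in> M" unfolding M_def min_strongly_fixed_def using fp sfp p_def by simp
      then have "j < L" using L p_def jle by fastforce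
      then have me: "map \<xi>' [N..<N+j] = map \<xi> [N..<N+j]" using agree n_def by simp
      have "SF' k (map \<xi>' [N..<N+j])" using Sj unfolding tZ .
      then have "SF' k (map \<xi> [N..<N+j])" unfolding me .
      with star[of "N+j"] show False by simp
    qed
    then show ?thesis by blast
  qed
qed


lemma RF_ex: "\<exists>a. r a = v"
  using RF unfolding row_finite_no_sources_def by blast

lemma RF_fin: "finite {a. r a = v}"
  using RF unfolding row_finite_no_sources_def by blast

lemma inf_ext:
  assumes fp: "is_fpath r s p"
  shows "\<exists>\<xi>. \<xi> \<in> CYL p"
proof -
  define nx where "nx v = (SOME a. r a = v)" for v
  have nx: "r (nx v) = v" for v unfolding nx_def by (rule someI_ex) (rule RF_ex)
  define sq :: "nat \<Rightarrow> 'e" where "sq = rec_nat (nx (psrc s p)) (\<lambda>_ e. nx (s e))"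
  have sq0: "sq 0 = nx (psrc s p)" and sqS: "sq (Suc i) = nx (s (sq i))" for i by (simp_all add: sq_def)
  define l where "l = length (snd p)"
  define \<xi> where "\<xi> i = (if i < l then snd p ! i else sq (i - l))" for i
  have ip: "is_ipath r s \<xi>" unfolding is_ipath_def
  proof
    fix i
    show "s (\<xi> i) = r (\<xi> (Suc i))"
    proof (cases "Suc i < l")
      case True
      then show ?thesis using fp unfolding is_fpath_def \<xi>_def l_def by simp
    next
      case False
      show ?thesis
      proof (cases "Suc i = l")
        case True
        have ne: "snd p \<noteq> []" using True l_def by auto
        have "last (snd p) = snd p ! (length (snd p) - 1)" using ne by (rule last_conv_nth)
        moreover have "length (snd p) - 1 = i" using True l_def by simp
        ultimately have "last (snd p) = snd p ! i" by simp
        with ne show ?thesis using True unfolding \<xi>_def by (simp add: sq0 nx psrc_def)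
      next
        case F2: False
        with False have "i \<ge> l" by simp
        then have "Suc i - l = Suc (i - l)" by simp
        then show ?thesis using \<open>i \<ge> l\<close> unfolding \<xi>_def by (simp add: sqS nx)
      qed
    qed
  qed
  have r0: "r (\<xi> 0) = fst p"
  proof (cases "l = 0")
    case True
    then show ?thesis unfolding \<xi>_def using l_def by (simp add: sq0 nx psrc_def)
  next
    case False
    then have "snd p \<noteq> []" using l_def by simp
    then show ?thesis using fp False unfolding \<xi>_def is_fpath_def by (simp add: hd_conv_nth)
  qed
  have "\<xi> \<in> CYL p" unfolding cyl_def using ip r0 \<xi>_def l_def by simp
  then show ?thesis by blast
qed

lemma koenig:
  assumes inf: "infinite {p. min_strongly_fixed G r s av ae phi g p \<and> fst p = x}"
  shows "\<exists>\<xi>. is_ipath r s \<xi> \<and> r (\<xi> 0) = x \<and>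
    (\<forall>n. infinite {p. min_strongly_fixed G r s av ae phi g p \<and> fst p = x \<and> (\<exists>ys. snd p = map \<xi> [0..<n] @ ys)})"
proof -
  define M where "M = {p. min_strongly_fixed G r s av ae phi g p \<and> fst p = x}"
  define Ext where "Ext l = {p\<in>M. \<exists>ys. snd p = l @ ys}" for l
  have step: "\<exists>a. r a = psrc s (x, l) \<and> infinite (Ext (l @ [a]))" if il: "infinite (Ext l)" for l
  proof (rule ccontr)
    assume "\<not> ?thesis"
    then have fin: "finite (Ext (l @ [a]))" if "r a = psrc s (x, l)" for a using that by blast
    have "Ext l \<subseteq> {(x, l)} \<union> (\<Union>a\<in>{a. r a = psrc s (x, l)}. Ext (l @ [a]))"
    proof
      fix p assume p: "p \<in> Ext l"
      then obtain ys where ys: "snd p = l @ ys" and pM: "p \<in> M" unfolding Ext_def by blast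
      have fx: "fst p = x" and fpp: "is_fpath r s p" using pM unfolding M_def min_strongly_fixed_def by auto
      show "p \<in> {(x, l)} \<union> (\<Union>a\<in>{a. r a = psrc s (x, l)}. Ext (l @ [a]))"
      proof (cases ys)
        case Nil
        then have "p = (x, l)" using ys fx by (cases p) auto
        then show ?thesis by simp
      next
        case (Cons a ys')
        have "r a = psrc s (x, l)"
        proof (cases "l = []")
          case True
          then show ?thesis using fpp ys Cons fx unfolding is_fpath_def psrc_def by simp
        next
          case False
          then obtain i where i: "Suc i = length l" by (metis length_greater_0_conv Suc_pred)
          have lt: "Suc i < length (snd p)" using ys Cons i by simp
          have "s (snd p ! i) = r (snd p ! Suc i)" using fpp lt unfolding is_fpath_def by blast
          moreover have il: "i < length l" "length l - 1 = i" using i by auto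
          moreover have "snd p ! i = last l" using ys il False by (simp add: last_conv_nth nth_append)
          moreover have "snd p ! Suc i = a" using ys Cons by (simp add: i nth_append)
          ultimately show ?thesis using False unfolding psrc_def by simp
        qed
        moreover have "p \<in> Ext (l @ [a])" using pM ys Cons unfolding Ext_def by simp
        ultimately show ?thesis by blast
      qed
    qed
    moreover have "finite ({(x, l)} \<union> (\<Union>a\<in>{a. r a = psrc s (x, l)}. Ext (l @ [a])))"
      using RF_fin fin by blast
    ultimately show False using il finite_subset by blast
  qed
  define nx where "nx l = (SOME a. r a = psrc s (x, l) \<and> infinite (Ext (l @ [a])))" for l
  have nx: "infinite (Ext l) \<Longrightarrow> r (nx l) = psrc s (x, l) \<and> infinite (Ext (l @ [nx l]))" for l
    unfolding nx_def by (rule someI_ex) (rule step)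
  define L where "L = rec_nat [] (\<lambda>_ l. l @ [nx l])"
  have L0: "L 0 = []" and LS: "L (Suc n) = L n @ [nx (L n)]" for n by (simp_all add: L_def)
  have Linf: "infinite (Ext (L n))" for n
  proof (induction n)
    case 0 then show ?case using inf unfolding L0 Ext_def M_def by simp
  next
    case (Suc n) then show ?case using nx LS by simp
  qed
  define \<xi> where "\<xi> n = nx (L n)" for n
  have Lm: "L n = map \<xi> [0..<n]" for n by (induction n) (simp_all add: L0 LS \<xi>_def)
  have rx: "r (\<xi> n) = psrc s (x, L n)" for n using nx Linf \<xi>_def by simp
  have ip: "is_ipath r s \<xi>" unfolding is_ipath_def
  proof
    fix i
    show "s (\<xi> i) = r (\<xi> (Suc i))" using rx[of "Suc i"] unfolding LS psrc_def \<xi>_def by simp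
  qed
  have "r (\<xi> 0) = x" using rx[of 0] unfolding L0 psrc_def by simp
  moreover have "\<forall>n. infinite {p. min_strongly_fixed G r s av ae phi g p \<and> fst p = x \<and> (\<exists>ys. snd p = map \<xi> [0..<n] @ ys)}"
    using Linf unfolding Lm Ext_def M_def by simp
  ultimately show ?thesis using ip by blast
qed


abbreviation "TOP \<equiv> topology_generated_by BO"

lemma B_open: "valid_S G r s av t \<Longrightarrow> is_fpath r s \<gamma> \<Longrightarrow> openin TOP (B t \<gamma>)"
proof (rule topology_generated_by_Basis)
  assume "valid_S G r s av t" "is_fpath r s \<gamma>"
  then show "B t \<gamma> \<in> BO" unfolding BO_eq by blast
qed

lemma B_mem: "(t, \<xi>) \<in> REPS \<Longrightarrow> \<xi> \<in> CYL \<gamma> \<Longrightarrow> GERM t \<xi> \<in> B t \<gamma>"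
  unfolding B_def reps_iff by blast

lemma B_elem: "valid_S G r s av t \<Longrightarrow> W \<in> B t \<gamma> \<Longrightarrow> \<exists>\<xi>. W = GERM t \<xi> \<and> (t, \<xi>) \<in> REPS \<and> \<xi> \<in> CYL \<gamma>"
  unfolding B_def reps_iff by blast

lemma topsp: "P \<in> topspace TOP \<Longrightarrow> \<exists>t \<xi>. (t, \<xi>) \<in> REPS \<and> P = GERM t \<xi>"
  unfolding topology_generated_by_topspace BO_eq B_def reps_iff by blast

lemma reps_ipath: "(t, \<xi>) \<in> REPS \<Longrightarrow> is_ipath r s \<xi>"
  using reps_iff cyl_iff by blast

lemma haus:
  assumes H: "\<forall>g\<in>carrier G. \<forall>x. finite {p. min_strongly_fixed G r s av ae phi g p \<and> fst p = x}"
  shows "Hausdorff_space TOP"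
  unfolding Hausdorff_space_def
proof (intro allI impI)
  fix P Q assume PQ: "P \<in> topspace TOP \<and> Q \<in> topspace TOP \<and> P \<noteq> Q"
  then obtain t \<xi> u \<mu> where A: "(t, \<xi>) \<in> REPS" "P = GERM t \<xi>" and Bu: "(u, \<mu>) \<in> REPS" "Q = GERM u \<mu>"
    using topsp by metis
  have vt: "valid_S G r s av t" and vu: "valid_S G r s av u" using A Bu reps_iff by auto
  have ipx: "is_ipath r s \<xi>" and ipm: "is_ipath r s \<mu>" using A Bu reps_ipath by auto
  show "\<exists>U V. openin TOP U \<and> openin TOP V \<and> P \<in> U \<and> Q \<in> V \<and> disjnt U V"
  proof (cases "\<xi> = \<mu>")
    case False
    then obtain i where i: "\<xi> i \<noteq> \<mu> i" by blast
    define n where "n = Suc i"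
    have "disjnt (B t (gam \<xi> n)) (B u (gam \<mu> n))"
      unfolding disjnt_def
    proof (rule ccontr)
      assume "B t (gam \<xi> n) \<inter> B u (gam \<mu> n) \<noteq> {}"
      then obtain W where "W \<in> B t (gam \<xi> n)" "W \<in> B u (gam \<mu> n)" by blast
      then obtain \<xi>' \<mu>' where "W = GERM t \<xi>'" "(t, \<xi>') \<in> REPS" "\<xi>' \<in> CYL (gam \<xi> n)"
        "W = GERM u \<mu>'" "(u, \<mu>') \<in> REPS" "\<mu>' \<in> CYL (gam \<mu> n)" using B_elem vt vu by metis
      then have "\<xi>' = \<mu>'" "gam \<xi>' n = gam \<xi> n" "gam \<mu>' n = gam \<mu> n" using germ_eq_D cyl_gam by auto
      then have "\<xi> i = \<mu> i" unfolding gam_eq_iff n_def by auto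
      with i show False by simp
    qed
    moreover have "P \<in> B t (gam \<xi> n)" unfolding A(2) by (rule B_mem[OF A(1)]) (simp add: cyl_gam ipx)
    moreover have "Q \<in> B u (gam \<mu> n)" unfolding Bu(2) by (rule B_mem[OF Bu(1)]) (simp add: cyl_gam ipm)
    moreover have "openin TOP (B t (gam \<xi> n))" by (rule B_open[OF vt fpath_gam[OF ipx]])
    moreover have "openin TOP (B u (gam \<mu> n))" by (rule B_open[OF vu fpath_gam[OF ipm]])
    ultimately show ?thesis by blast
  next
    case True
    then have Bu': "(u, \<xi>) \<in> REPS" using Bu by simp
    have "\<not> ev t u \<xi>" using germ_eqI[OF A(1) Bu'] PQ A Bu True by auto
    then obtain n where n: "\<forall>\<xi>'. \<xi>' \<in> CYL (gam \<xi> n) \<longrightarrow> \<not> ev t u \<xi>'" using sep[OF H A(1) Bu'] by blast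
    have "disjnt (B t (gam \<xi> n)) (B u (gam \<xi> n))"
      unfolding disjnt_def
    proof (rule ccontr)
      assume "B t (gam \<xi> n) \<inter> B u (gam \<xi> n) \<noteq> {}"
      then obtain W where "W \<in> B t (gam \<xi> n)" "W \<in> B u (gam \<xi> n)" by blast
      then obtain \<xi>' \<mu>' where "W = GERM t \<xi>'" "(t, \<xi>') \<in> REPS" "\<xi>' \<in> CYL (gam \<xi> n)"
        "W = GERM u \<mu>'" "(u, \<mu>') \<in> REPS" using B_elem vt vu by metis
      then have "ev t u \<xi>'" "\<xi>' \<in> CYL (gam \<xi> n)" using germ_eq_D by metis+
      with n show False by blast
    qed
    moreover have "P \<in> B t (gam \<xi> n)" unfolding A(2) by (rule B_mem[OF A(1)]) (simp add: cyl_gam ipx)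
    moreover have "Q \<in> B u (gam \<xi> n)" unfolding Bu(2) True[symmetric] by (rule B_mem[OF Bu']) (simp add: cyl_gam ipx)
    moreover have "openin TOP (B t (gam \<xi> n))" by (rule B_open[OF vt fpath_gam[OF ipx]])
    moreover have "openin TOP (B u (gam \<xi> n))" by (rule B_open[OF vu fpath_gam[OF ipx]])
    ultimately show ?thesis by blast
  qed
qed

lemma not_haus:
  assumes g: "g \<in> carrier G" and inf: "infinite {p. min_strongly_fixed G r s av ae phi g p \<and> fst p = x}"
  shows "\<not> Hausdorff_space TOP"
proof
  assume HS: "Hausdorff_space TOP"
  define M where "M = {p. min_strongly_fixed G r s av ae phi g p \<and> fst p = x}"
  obtain \<xi> where ip: "is_ipath r s \<xi>" and r0: "r (\<xi> 0) = x" and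
    infn: "\<And>n. infinite {p\<in>M. \<exists>ys. snd p = map \<xi> [0..<n] @ ys}"
    using koenig[OF inf] unfolding M_def by auto
  have getp: "\<exists>p\<in>M. \<exists>ys. snd p = map \<xi> [0..<n] @ ys \<and> ys \<noteq> []" for n
  proof -
    have "infinite ({p\<in>M. \<exists>ys. snd p = map \<xi> [0..<n] @ ys} - {(x, map \<xi> [0..<n])})"
      using infn by simp
    then obtain p where "p \<in> M" "\<exists>ys. snd p = map \<xi> [0..<n] @ ys" "p \<noteq> (x, map \<xi> [0..<n])"
      using infinite_imp_nonempty by blast
    moreover then have "fst p = x" unfolding M_def by simp
    ultimately show ?thesis by (metis append.right_neutral prod.collapse)
  qed
  have pM: "is_fpath r s p \<and> fst p = x \<and> act_list ae phi g (snd p) = snd p \<and> av g x = x \<and> phi_list phi g (snd p) = \<one>"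
    if "p \<in> M" for p
    using that unfolding M_def min_strongly_fixed_def strongly_fixed_def act_path_def phi_path_def
    by (cases p) auto
  have avx: "av g x = x" using getp[of 0] pM by blast
  have notsf: "\<not> (act_list ae phi g (map \<xi> [0..<n]) = map \<xi> [0..<n] \<and> phi_list phi g (map \<xi> [0..<n]) = \<one>)" for n
  proof
    assume a: "act_list ae phi g (map \<xi> [0..<n]) = map \<xi> [0..<n] \<and> phi_list phi g (map \<xi> [0..<n]) = \<one>"
    obtain p ys where p: "p \<in> M" "snd p = map \<xi> [0..<n] @ ys" "ys \<noteq> []" using getp by blast
    have allk: "\<forall>k<length (snd p). \<not> strongly_fixed G av ae phi g (fst p, take k (snd p))"
      using p(1) unfolding M_def min_strongly_fixed_def by blast
    have "n < length (snd p)" using p(2,3) by simp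
    with allk have "\<not> strongly_fixed G av ae phi g (fst p, take n (snd p))" by blast
    moreover have "fst p = x" using pM p by blast
    ultimately show False using a avx p(2) unfolding strongly_fixed_def act_path_def phi_path_def by simp
  qed
  define x0 :: "('v,'e) fpath" where "x0 = (x, [])"
  define t1 where "t1 = (x0, g, x0)"
  define t2 where "t2 = (x0, \<one>, x0)"
  have vt1: "valid_S G r s av t1" unfolding t1_def x0_def valid_S_def using g avx
    by (simp add: is_fpath_def psrc_def)
  have vt2: "valid_S G r s av t2" unfolding t2_def x0_def valid_S_def
    by (simp add: is_fpath_def psrc_def av_one)
  have cx0: "\<xi>' \<in> CYL x0 \<longleftrightarrow> is_ipath r s \<xi>' \<and> r (\<xi>' 0) = x" for \<xi>'
    unfolding cyl_def x0_def by simp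
  have R1: "(t1, \<xi>') \<in> REPS" and R2: "(t2, \<xi>') \<in> REPS" if "is_ipath r s \<xi>'" "r (\<xi>' 0) = x" for \<xi>'
    using vt1 vt2 cx0 that unfolding reps_iff t1_def t2_def by auto
  have e1: "ext t1 \<xi>' m = ((x, act_list ae phi g (map \<xi>' [0..<m])), phi_list phi g (map \<xi>' [0..<m]), gam \<xi>' m)" for \<xi>' m
    unfolding ext_def t1_def x0_def by simp
  have e2: "ext t2 \<xi>' m = ((x, map \<xi>' [0..<m]), \<one>, gam \<xi>' m)" for \<xi>' m
    unfolding ext_def t2_def x0_def by simp
  have bl: "blen t1 = 0" "blen t2 = 0" unfolding blen_def t1_def t2_def x0_def by simp_all
  have "\<not> ev t1 t2 \<xi>"
  proof
    assume "ev t1 t2 \<xi>"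
    then obtain m where "ext t1 \<xi> m = ext t2 \<xi> m" unfolding ev_def by blast
    then show False using notsf[of m] unfolding e1 e2 by simp
  qed
  then have PQ: "GERM t1 \<xi> \<noteq> GERM t2 \<xi>" using germ_eq_D R1 R2 ip r0 by metis
  have inB: "GERM t1 \<xi> \<in> B t1 x0" "GERM t2 \<xi> \<in> B t2 x0" using B_mem R1 R2 ip r0 cx0 by auto
  have fx0: "is_fpath r s x0" unfolding x0_def is_fpath_def by simp
  have "GERM t1 \<xi> \<in> topspace TOP" "GERM t2 \<xi> \<in> topspace TOP"
    using inB B_open[OF vt1 fx0] B_open[OF vt2 fx0] openin_subset by blast+
  with HS PQ obtain U V where UV: "openin TOP U" "openin TOP V" "GERM t1 \<xi> \<in> U" "GERM t2 \<xi> \<in> V" "disjnt U V"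
    unfolding Hausdorff_space_def by metis
  obtain n1 where n1: "\<forall>\<xi>'. \<xi>' \<in> CYL (gam \<xi> n1) \<longrightarrow> GERM t1 \<xi>' \<in> U"
    using nbhd[OF openin_topology_generated_by[OF UV(1)] R1[OF ip r0] UV(3)] by blast
  obtain n2 where n2: "\<forall>\<xi>'. \<xi>' \<in> CYL (gam \<xi> n2) \<longrightarrow> GERM t2 \<xi>' \<in> V"
    using nbhd[OF openin_topology_generated_by[OF UV(2)] R2[OF ip r0] UV(4)] by blast
  define n where "n = max n1 n2"
  obtain p ys where p: "p \<in> M" "snd p = map \<xi> [0..<n] @ ys" using getp by blast
  have pp: "is_fpath r s p" "fst p = x" "act_list ae phi g (snd p) = snd p" "phi_list phi g (snd p) = \<one>"
    using pM[OF p(1)] by auto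
  obtain \<xi>' where x': "\<xi>' \<in> CYL p" using inf_ext[OF pp(1)] by blast
  define l where "l = length (snd p)"
  have ip': "is_ipath r s \<xi>'" using cylD_ip[OF x'] .
  have pg: "p = gam \<xi>' l" unfolding l_def by (rule cylD[OF x'])
  have r0': "r (\<xi>' 0) = x" using pg pp(2) by (metis fst_gam)
  have sp: "snd p = map \<xi>' [0..<l]" using pg by (metis snd_gam)
  have nl: "n \<le> l" using p(2) l_def by simp
  have "take n (snd p) = map \<xi> [0..<n]" using p(2) by simp
  moreover have "take n (snd p) = map \<xi>' [0..<n]" using sp nl take_map_upt[of n l 0 \<xi>'] by simp
  ultimately have "gam \<xi>' n = gam \<xi> n" using r0 r0' unfolding gam_def by simp
  then have xc: "\<xi>' \<in> CYL (gam \<xi> n)" using ip' cyl_gam by simp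
  have "GERM t1 \<xi>' \<in> U" using n1 cyl_gam_mono[OF xc] n_def by simp
  moreover have "GERM t2 \<xi>' \<in> V" using n2 cyl_gam_mono[OF xc] n_def by simp
  moreover have "GERM t1 \<xi>' = GERM t2 \<xi>'"
  proof (rule germ_eqI[OF R1[OF ip' r0'] R2[OF ip' r0']])
    have "ext t1 \<xi>' l = ext t2 \<xi>' l" unfolding e1 e2 using pp sp by simp
    then show "ev t1 t2 \<xi>'" using ev_shift[of t1 \<xi>' l t2 \<xi>'] bl by simp
  qed
  ultimately show False using UV(5) unfolding disjnt_def by auto
qed

end

theorem theorem4p2:
  fixes G :: "'g monoid"
    and r s :: "'e \<Rightarrow> 'v"
    and av :: "'g \<Rightarrow> 'v \<Rightarrow> 'v"
    and ae :: "'g \<Rightarrow> 'e \<Rightarrow> 'e"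
    and phi :: "'g \<Rightarrow> 'e \<Rightarrow> 'g"
  assumes "countable (UNIV :: 'v set)" and "countable (UNIV :: 'e set)"
    and "row_finite_no_sources r"
    and "group G"
    and "graph_action G r s av ae"
    and "one_cocycle G ae phi"
    and "\<forall>g\<in>carrier G. \<forall>a x. av (phi g a) x = av g x"
  shows "(\<forall>g\<in>carrier G. \<forall>x. finite {p. min_strongly_fixed G r s av ae phi g p \<and> fst p = x})
         \<longleftrightarrow> Hausdorff_space (tight_groupoid_topology G r s av ae phi)"
proof -
  interpret S: SSG G r s av ae phi
    using assms by (simp add: SSG_def SSG_axioms_def)
  show ?thesis unfolding tight_groupoid_topology_def
    using S.haus S.not_haus by blast
qed

end
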